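(* Let $I$ be a non-empty finite set and, in the setting described in the context, let $r\in R$, $k\in I$ and $s\in\mathbb{N}$. Then the class $$S^{(r)}_{k,s}(I)=\bigcap_{n=1}^\infty E^{(r)}_{n,k,s}(I),\qquad E^{(r)}_{n,k,s}(I)=\{f\in A(\Omega):\operatorname{Re}(f\circ\phi_r)\restriction_{\mathbb{T}^I}\in D_{n,k,s}(I)\},$$ is dense in $A(\Omega)$.
   Context: For each $i\in I$, $\Omega_i\subset\mathbb{C}$ is a bounded domain whose boundary consists of $k_i$ disjoint Jordan curves; $V_{i,j}$, $j\in\{0,\dots,k_i-1\}$, are the connected components of $\hat{\mathbb{C}}\setminus\overline{\Omega_i}$, $\Omega_{i,j}=\hat{\mathbb{C}}\setminus\overline{V_{i,j}}$, and $\phi_{i,j}:\overline{D}\to\overline{\Omega_{i,j}}$ are fixed Riemann mappings (homeomorphisms of the closed unit disc onto the closure in $\hat{\mathbb{C}}$, conformal from $D$ onto $\Omega_{i,j}$). $\Omega=\prod_{i\in I}\Omega_i$, $\overline{\Omega}=\prod_{i\in I}\overline{\Omega_i}$ with the product topology. $A(\Omega)$ is the space of functions $f:\overline{\Omega}\to\mathbb{C}$ that are continuous on $\overline{\Omega}$ and separately holomorphic on $\Omega$ (holomorphic in each variable $z_{i_0}\in\Omega_{i_0}$ when the others are fixed), with the supremum norm. $R=\prod_{i\in I}\{0,\dots,k_i-1\}$, and for $r=(r_i)\in R$, $\phi_r:\overline{D}^I\to\prod_{i\in I}\overline{\Omega_{i,r_i}}$, $(z_i)\mapsto(\phi_{i,r_i}(z_i))$.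 Functions on $\mathbb{T}^I$ are identified with functions on $\mathbb{R}^I$ that are $2\pi$-periodic in each coordinate via $\theta\mapsto(e^{i\theta_j})_{j\in I}$. For $n,s\in\mathbb{N}$, $k\in I$, $D_{n,k,s}(I)$ is the set of real continuous $u$ on $\mathbb{T}^I$ such that for every $\theta\in\mathbb{R}^I$ and every $v\in\mathbb{R}^I$ with $\frac1s\le|v_k|\le s$ and $|v_j|\le s$ for all $j\in I$, there exists $y$ in the segment $\{\theta+tv:-\frac1n<t<\frac1n\}$ with $|u(\theta)-u(y)|>n\|y-\theta\|_\infty$. *)

theory Defs
  imports "HOL-Complex_Analysis.Complex_Analysis"
begin

definition sup_norm_fin :: "('i::finite \<Rightarrow> real) \<Rightarrow> real" where
  "sup_norm_fin x = Max (range (\<lambda>j. \<bar>x j\<bar>))"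

definition jordan_curve :: "(real \<Rightarrow> complex) \<Rightarrow> bool" where
  "jordan_curve g \<longleftrightarrow> simple_path g \<and> pathfinish g = pathstart g"

definition bdd_domain_jordan_bdry :: "complex set \<Rightarrow> nat \<Rightarrow> bool" where
  "bdd_domain_jordan_bdry U m \<longleftrightarrow> open U \<and> connected U \<and> U \<noteq> {} \<and> bounded U \<and>
     (\<exists>\<gamma>::nat \<Rightarrow> real \<Rightarrow> complex.
        (\<forall>j<m. jordan_curve (\<gamma> j)) \<and>
        (\<forall>j<m. \<forall>l<m. j \<noteq> l \<longrightarrow> path_image (\<gamma> j) \<inter> path_image (\<gamma> l) = {}) \<and>
        frontier U = (\<Union>j<m. path_image (\<gamma> j)))"

text \<open>Riemann map of the closed disc onto the closure (in the Riemann sphere) of a domain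
  W of the Riemann sphere, where W is represented by its finite part U = W \<inter> C.  If U is unbounded
  (infinity in W), there is a unique point p of the open disc sent to infinity: phi is
  a continuous injection of the punctured closed disc onto closure U (in C), holomorphic
  from the punctured open disc onto U, and phi z tends to infinity as z tends to p.\<close>
definition riemann_map_closed :: "(complex \<Rightarrow> complex) \<Rightarrow> complex set \<Rightarrow> bool" where
  "riemann_map_closed \<phi> U \<longleftrightarrow>
     (bounded U \<longrightarrow>
        continuous_on (cball 0 1) \<phi> \<and> inj_on \<phi> (cball 0 1) \<and>
        \<phi> ` cball 0 1 = closure U \<and> \<phi> holomorphic_on ball 0 1 \<and> \<phi> ` ball 0 1 = U) \<and>
     (\<not> bounded U \<longrightarrow>
        (\<exists>p\<in>ball 0 1.
           continuous_on (cball 0 1 - {p}) \<phi> \<and> inj_on \<phi> (cball 0 1 - {p}) \<and>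
           \<phi> ` (cball 0 1 - {p}) = closure U \<and> \<phi> holomorphic_on (ball 0 1 - {p}) \<and>
           \<phi> ` (ball 0 1 - {p}) = U \<and> filterlim \<phi> at_infinity (at p)))"

definition A_space :: "('i \<Rightarrow> complex set) \<Rightarrow> (('i \<Rightarrow> complex) \<Rightarrow> complex) set" where
  "A_space \<Omega> = {f. continuous_on (Pi UNIV (\<lambda>i. closure (\<Omega> i))) f \<and>
      (\<forall>z \<in> Pi UNIV \<Omega>. \<forall>i0. (\<lambda>w. f (z(i0 := w))) holomorphic_on \<Omega> i0)}"

text \<open>D_{n,k,s}(I): real continuous functions on T^I (= 2pi-periodic functions on R^I).\<close>
definition D_set :: "nat \<Rightarrow> 'i::finite \<Rightarrow> nat \<Rightarrow> (('i \<Rightarrow> real) \<Rightarrow> real) set" where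
  "D_set n k s = {u. continuous_on UNIV u \<and>
      (\<forall>\<theta> j. u (\<theta>(j := \<theta> j + 2 * pi)) = u \<theta>) \<and>
      (\<forall>\<theta> v. (1 / real s \<le> \<bar>v k\<bar> \<and> \<bar>v k\<bar> \<le> real s \<and> (\<forall>j. \<bar>v j\<bar> \<le> real s)) \<longrightarrow>
         (\<exists>t. - 1 / real n < t \<and> t < 1 / real n \<and>
            (let y = (\<lambda>j. \<theta> j + t * v j) in
               \<bar>u \<theta> - u y\<bar> > real n * sup_norm_fin (\<lambda>j. y j - \<theta> j))))}"

definition phi_r_T :: "('i \<Rightarrow> nat \<Rightarrow> complex \<Rightarrow> complex) \<Rightarrow> ('i \<Rightarrow> nat) \<Rightarrow> ('i \<Rightarrow> real) \<Rightarrow> ('i \<Rightarrow> complex)" where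
  "phi_r_T \<phi> r \<theta> = (\<lambda>i. \<phi> i (r i) (exp (\<i> * complex_of_real (\<theta> i))))"

definition E_set where
  "E_set \<Omega> \<phi> r n k s =
     {f \<in> A_space \<Omega>. (\<lambda>\<theta>. Re (f (phi_r_T \<phi> r \<theta>))) \<in> D_set n k s}"

definition S_set where
  "S_set \<Omega> \<phi> r k s = (\<Inter>n\<in>{1..}. E_set \<Omega> \<phi> r n k s)"

end

theory Submission imports Defs begin

lemma cos_lip: "\<bar>cos (a::real) - cos b\<bar> \<le> \<bar>a - b\<bar>"
proof -
  have "\<bar>cos a - cos b\<bar> = 2 * \<bar>sin ((a + b) / 2)\<bar> * \<bar>sin ((b - a) / 2)\<bar>"
    by (simp add: cos_diff_cos abs_mult)
  also have "\<dots> \<le> 2 * 1 * \<bar>(b - a) / 2\<bar>"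
    by (intro mult_mono abs_sin_x_le_abs_x) auto
  finally show ?thesis by simp
qed

lemma sin_lip: "\<bar>sin (a::real) - sin b\<bar> \<le> \<bar>a - b\<bar>"
proof -
  have "\<bar>sin a - sin b\<bar> = 2 * \<bar>sin ((a - b) / 2)\<bar> * \<bar>cos ((a + b) / 2)\<bar>"
    by (simp add: sin_diff_sin abs_mult)
  also have "\<dots> \<le> 2 * \<bar>(a - b) / 2\<bar> * 1"
    by (intro mult_mono abs_sin_x_le_abs_x) auto
  finally show ?thesis by simp
qed

lemma cis_lip: "cmod (cis a - cis b) \<le> 2 * \<bar>a - b\<bar>"
proof -
  have "cmod (cis a - cis b) \<le> \<bar>Re (cis a - cis b)\<bar> + \<bar>Im (cis a - cis b)\<bar>"
    by (rule cmod_le)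
  also have "\<dots> \<le> \<bar>a - b\<bar> + \<bar>a - b\<bar>"
    using cos_lip[of a b] sin_lip[of a b] by simp
  finally show ?thesis by simp
qed

lemma sup_norm_ge: "\<bar>x j\<bar> \<le> sup_norm_fin (x :: 'i::finite \<Rightarrow> real)"
  unfolding sup_norm_fin_def by (rule Max_ge) auto

lemma sup_norm_le: "(\<And>j. \<bar>x j\<bar> \<le> B) \<Longrightarrow> sup_norm_fin (x :: 'i::finite \<Rightarrow> real) \<le> B"
  unfolding sup_norm_fin_def by (subst Max_le_iff) auto

lemma compact_T: "compact (Pi UNIV (\<lambda>i::'i::finite. sphere (0::complex) 1))"
proof -
  have "compactin (product_topology (\<lambda>_. euclidean) UNIV) (PiE UNIV (\<lambda>i::'i. sphere (0::complex) 1))"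
    by (simp add: compactin_PiE)
  then show ?thesis
    by (simp add: euclidean_product_topology PiE_UNIV_domain)
qed

lemma uc_lemma:
  fixes F :: "('i::finite \<Rightarrow> complex) \<Rightarrow> real"
  assumes cF: "continuous_on (Pi UNIV (\<lambda>i. sphere 0 1)) F" and e: "e > 0"
  shows "\<exists>d>0. \<forall>\<theta> \<theta>'. sup_norm_fin (\<lambda>j. \<theta>' j - \<theta> j) < d \<longrightarrow>
           \<bar>F (\<lambda>i. cis (\<theta> i)) - F (\<lambda>i. cis (\<theta>' i))\<bar> < e"
proof -
  have "uniformly_continuous_on (Pi UNIV (\<lambda>i::'i. sphere (0::complex) 1)) F"
    using compact_uniformly_continuous[OF cF compact_T] .
  then obtain d1 where d1: "d1 > 0" and
    d1p: "\<And>x x'. x \<in> Pi UNIV (\<lambda>i. sphere 0 1) \<Longrightarrow> x' \<in> Pi UNIV (\<lambda>i. sphere 0 1) \<Longrightarrow>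
          dist x' x < d1 \<Longrightarrow> dist (F x') (F x) < e"
    unfolding uniformly_continuous_on_def using e by metis
  obtain N :: nat where N: "(1/2::real)^N < d1/2"
    using real_arch_pow_inv[of "d1/2" "1/2"] d1 by auto
  show ?thesis
  proof (intro exI[of _ "d1/8"] conjI allI impI)
    show "d1/8 > 0" using d1 by simp
    fix \<theta> \<theta>' :: "'i \<Rightarrow> real"
    assume a: "sup_norm_fin (\<lambda>j. \<theta>' j - \<theta> j) < d1/8"
    let ?x = "\<lambda>i. cis (\<theta> i)" and ?x' = "\<lambda>i. cis (\<theta>' i)"
    have cd: "dist (?x' j) (?x j) \<le> d1/4" for j
    proof -
      have "dist (?x' j) (?x j) \<le> 2 * \<bar>\<theta>' j - \<theta> j\<bar>"
        using cis_lip[of "\<theta>' j" "\<theta> j"] by (simp add: dist_norm)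
      also have "\<dots> \<le> 2 * sup_norm_fin (\<lambda>j. \<theta>' j - \<theta> j)"
        using sup_norm_ge[of "\<lambda>j. \<theta>' j - \<theta> j" j] by simp
      finally show ?thesis using a by simp
    qed
    have "Max {dist (?x' (from_nat n)) (?x (from_nat n)) |n. n \<le> N} \<le> d1/4"
      using cd by (subst Max_le_iff) auto
    then have "dist ?x' ?x < d1"
      using dist_fun_le_dist_first_terms[of ?x' ?x N] N by linarith
    then have "dist (F ?x') (F ?x) < e"
      by (intro d1p) auto
    then show "\<bar>F ?x - F ?x'\<bar> < e" by (simp add: dist_real_def abs_minus_commute)
  qed
qed


lemma geo_facts:
  fixes \<epsilon> :: real
  defines "c \<equiv> \<lambda>j::nat. \<epsilon>/2 * (1/4)^j"
  shows "summable c" "suminf c = 2 * \<epsilon>/3" "(\<Sum>j. c (j + Suc n)) = c n / 3"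
    "summable (\<lambda>j. c (j + Suc n))"
proof -
  have s4: "summable (\<lambda>j. (1/4::real)^j)" by (rule summable_geometric) simp
  have S4: "(\<Sum>j. (1/4::real)^j) = 4/3" using suminf_geometric[of "1/4::real"] by simp
  show "summable c" unfolding c_def by (rule summable_mult[OF s4])
  show "suminf c = 2 * \<epsilon>/3" unfolding c_def using suminf_mult[OF s4, of "\<epsilon>/2"] S4 by simp
  have e: "c (j + Suc n) = (c n / 4) * (1/4)^j" for j
    unfolding c_def by (simp add: power_add)
  show "summable (\<lambda>j. c (j + Suc n))" unfolding e by (rule summable_mult[OF s4])
  show "(\<Sum>j. c (j + Suc n)) = c n / 3" unfolding e
    using suminf_mult[OF s4, of "c n / 4"] S4 by simp
qed

lemma W_decomp:
  fixes \<epsilon> :: real and M :: "nat \<Rightarrow> nat"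
  defines "c \<equiv> \<lambda>j::nat. \<epsilon>/2 * (1/4)^j"
  assumes e: "\<epsilon> > 0"
  shows "\<bar>(\<Sum>j. c j * cos (real (M j) * a)) - (\<Sum>j. c j * cos (real (M j) * b))
          - c n * (cos (real (M n) * a) - cos (real (M n) * b))\<bar>
         \<le> (\<Sum>j<n. c j * real (M j)) * \<bar>a - b\<bar> + 2 * c n / 3"
proof -
  have g1: "summable c" unfolding c_def using geo_facts(1)[of \<epsilon>] by simp
  have g3: "(\<Sum>j. c (j + Suc n)) = c n / 3" unfolding c_def using geo_facts(3)[of \<epsilon> n] by simp
  have g4: "summable (\<lambda>j. c (j + Suc n))" unfolding c_def using geo_facts(4)[of \<epsilon> n] by simp
  have cpos: "c j \<ge> 0" for j unfolding c_def using e by simp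
  have sa: "summable (\<lambda>j. c j * cos (real (M j) * x))" for x
    by (rule summable_comparison_test'[OF g1]) (simp add: abs_mult cpos mult_left_le)
  define bb where "bb j = c j * (cos (real (M j) * a) - cos (real (M j) * b))" for j
  have sb: "summable bb"
    unfolding bb_def using summable_diff[OF sa sa] by (simp add: right_diff_distrib)
  have "(\<Sum>j. c j * cos (real (M j) * a)) - (\<Sum>j. c j * cos (real (M j) * b)) = suminf bb"
    unfolding bb_def using suminf_diff[OF sa sa] by (simp add: right_diff_distrib)
  also have "\<dots> = (\<Sum>j. bb (j + Suc n)) + sum bb {..<Suc n}"
    by (rule suminf_split_initial_segment[OF sb])
  finally have eq: "(\<Sum>j. c j * cos (real (M j) * a)) - (\<Sum>j. c j * cos (real (M j) * b))
      - c n * (cos (real (M n) * a) - cos (real (M n) * b)) = (\<Sum>j. bb (j + Suc n)) + sum bb {..<n}"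
    by (simp add: bb_def)
  have t: "\<bar>\<Sum>j. bb (j + Suc n)\<bar> \<le> (\<Sum>j. 2 * c (j + Suc n))"
  proof -
    have "norm (\<Sum>j. bb (j + Suc n)) \<le> (\<Sum>j. 2 * c (j + Suc n))"
    proof (rule norm_suminf_le)
      fix j
      have "\<bar>cos (real (M (j + Suc n)) * a) - cos (real (M (j + Suc n)) * b)\<bar> \<le> 2"
        using abs_triangle_ineq4[of "cos (real (M (j + Suc n)) * a)" "cos (real (M (j + Suc n)) * b)"]
          abs_cos_le_one[of "real (M (j + Suc n)) * a"] abs_cos_le_one[of "real (M (j + Suc n)) * b"]
        by linarith
      then show "norm (bb (j + Suc n)) \<le> 2 * c (j + Suc n)"
        unfolding bb_def using cpos[of "j + Suc n"]
        by (simp add: abs_mult mult.commute) (metis mult.commute mult_left_mono)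
    qed (rule summable_mult[OF g4])
    then show ?thesis by simp
  qed
  have t2: "(\<Sum>j. 2 * c (j + Suc n)) = 2 * c n / 3"
    using suminf_mult[OF g4, of 2] g3 by simp
  have h: "\<bar>sum bb {..<n}\<bar> \<le> (\<Sum>j<n. c j * real (M j) * \<bar>a - b\<bar>)"
  proof -
    have "\<bar>sum bb {..<n}\<bar> \<le> (\<Sum>j<n. \<bar>bb j\<bar>)" by (rule sum_abs)
    also have "\<dots> \<le> (\<Sum>j<n. c j * real (M j) * \<bar>a - b\<bar>)"
    proof (rule sum_mono)
      fix j
      have "\<bar>cos (real (M j) * a) - cos (real (M j) * b)\<bar> \<le> \<bar>real (M j) * a - real (M j) * b\<bar>"
        by (rule cos_lip)
      also have "\<dots> = real (M j) * \<bar>a - b\<bar>" by (simp add: abs_mult right_diff_distrib[symmetric])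
      finally show "\<bar>bb j\<bar> \<le> c j * real (M j) * \<bar>a - b\<bar>"
        unfolding bb_def using cpos[of j] by (simp add: abs_mult mult.assoc mult_left_mono)
    qed
    finally show ?thesis .
  qed
  have "(\<Sum>j<n. c j * real (M j) * \<bar>a - b\<bar>) = (\<Sum>j<n. c j * real (M j)) * \<bar>a - b\<bar>"
    by (simp add: sum_distrib_right)
  moreover have "\<bar>(\<Sum>j. bb (j + Suc n)) + sum bb {..<n}\<bar> \<le> \<bar>\<Sum>j. bb (j + Suc n)\<bar> + \<bar>sum bb {..<n}\<bar>"
    by (rule abs_triangle_ineq)
  ultimately show ?thesis unfolding eq using t t2 h by linarith
qed


lemma point_choice:
  fixes Mn a \<beta> s :: real and z :: real
  assumes Mn: "Mn > 0" and b: "\<bar>\<beta>\<bar> \<ge> 1/s" and s: "s \<ge> 1"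
  shows "\<exists>t. \<bar>t\<bar> * \<bar>\<beta>\<bar> \<le> pi / Mn \<and> \<bar>t\<bar> \<le> pi * s / Mn \<and> cos (Mn * (a + t * \<beta>) + z) = 1"
proof -
  have bnz: "\<beta> \<noteq> 0" using b s by auto
  define x where "x = (Mn * a + z) / (2 * pi)"
  define q where "q = round x"
  have qx: "\<bar>of_int q - x\<bar> \<le> 1/2" unfolding q_def by (rule of_int_round_abs_le)
  define t where "t = (2 * pi * of_int q - (Mn * a + z)) / (Mn * \<beta>)"
  have eq: "Mn * (a + t * \<beta>) + z = 2 * pi * of_int q"
    unfolding t_def using Mn bnz by (simp add: field_simps)
  have num: "\<bar>2 * pi * of_int q - (Mn * a + z)\<bar> \<le> pi"
  proof -
    have "2 * pi * of_int q - (Mn * a + z) = 2 * pi * (of_int q - x)" unfolding x_def by (simp add: field_simps)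
    then have "\<bar>2 * pi * of_int q - (Mn * a + z)\<bar> = 2 * pi * \<bar>of_int q - x\<bar>" by (simp add: abs_mult)
    also have "\<dots> \<le> 2 * pi * (1/2)" using qx by (intro mult_left_mono) auto
    finally show ?thesis by simp
  qed
  have tb: "\<bar>t\<bar> * \<bar>\<beta>\<bar> \<le> pi / Mn"
  proof -
    have "\<bar>t\<bar> * \<bar>\<beta>\<bar> = \<bar>2 * pi * of_int q - (Mn * a + z)\<bar> / Mn"
      unfolding t_def using Mn bnz by (simp add: abs_mult abs_divide)
    also have "\<dots> \<le> pi / Mn" using num Mn by (simp add: divide_right_mono)
    finally show ?thesis .
  qed
  have "\<bar>t\<bar> \<le> pi * s / Mn"
  proof -
    have sb: "s * \<bar>\<beta>\<bar> \<ge> 1" using b s by (simp add: field_simps)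
    have "\<bar>t\<bar> \<le> \<bar>t\<bar> * (s * \<bar>\<beta>\<bar>)" using sb by (simp add: mult_le_cancel_left1)
    also have "\<dots> = s * (\<bar>t\<bar> * \<bar>\<beta>\<bar>)" by simp
    also have "\<dots> \<le> s * (pi / Mn)" using tb s by (intro mult_left_mono) auto
    finally show ?thesis by (simp add: mult.commute)
  qed
  moreover have "cos (Mn * (a + t * \<beta>) + z) = 1" unfolding eq by (rule cos_int_2pin)
  ultimately show ?thesis using tb by blast
qed

lemma core:
  fixes u :: "('i::finite \<Rightarrow> real) \<Rightarrow> real" and M :: "nat \<Rightarrow> nat" and \<epsilon> s dl :: real
    and n :: nat and k :: 'i and \<theta> v :: "'i \<Rightarrow> real" and c :: "nat \<Rightarrow> real"
  defines "L \<equiv> \<Sum>j<n. c j * real (M j)"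
  defines "U \<equiv> \<lambda>x. u x + (\<Sum>j. c j * cos (real (M j) * x k))"
  assumes cdef: "\<And>j. c j = \<epsilon>/2 * (1/4)^j"
  assumes e: "\<epsilon> > 0" and n: "n \<ge> 1" and s: "s \<ge> 1" and dl: "dl > 0"
    and uc: "\<And>x y. sup_norm_fin (\<lambda>j. y j - x j) < dl \<Longrightarrow> \<bar>u x - u y\<bar> < c n / 3"
    and M1: "real (M n) > pi * s * n" and M2: "real (M n) > 2 * pi * (s * s) / dl"
    and M3: "real (M n) \<ge> 6 * pi * L / c n" and M4: "real (M n) \<ge> 6 * real n * pi * (s * s) / c n"
    and v1: "1/s \<le> \<bar>v k\<bar>" and v2: "\<And>j. \<bar>v j\<bar> \<le> s"
  shows "\<exists>t. - 1 / real n < t \<and> t < 1 / real n \<and>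
            real n * sup_norm_fin (\<lambda>j. (\<theta> j + t * v j) - \<theta> j) < \<bar>U \<theta> - U (\<lambda>j. \<theta> j + t * v j)\<bar>"
proof (rule ccontr)
  assume "\<not> ?thesis"
  have c_def: "c = (\<lambda>j::nat. \<epsilon>/2 * (1/4)^j)" using cdef by auto
  from \<open>\<not> ?thesis\<close> have H: "\<And>t. - 1 / real n < t \<Longrightarrow> t < 1 / real n \<Longrightarrow>
      \<bar>U \<theta> - U (\<lambda>j. \<theta> j + t * v j)\<bar> \<le> real n * sup_norm_fin (\<lambda>j. t * v j)"
    by (simp add: not_less) (meson linorder_not_le)
  have cpos: "c n > 0" unfolding c_def using e by simp
  have Lnn: "L \<ge> 0" unfolding L_def c_def using e by (intro sum_nonneg) auto
  define Mn where "Mn = real (M n)"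
  have npos: "real n > 0" using n by simp
  have Mn: "Mn > 0" unfolding Mn_def using M1 s npos by (smt (verit) mult_pos_pos pi_gt_zero)
  have sn: "sup_norm_fin (\<lambda>j. t * v j) \<le> \<bar>t\<bar> * s" for t
    by (rule sup_norm_le) (simp add: abs_mult mult_left_mono v2)
  obtain t1 where t1: "\<bar>t1\<bar> * \<bar>v k\<bar> \<le> pi / Mn" "\<bar>t1\<bar> \<le> pi * s / Mn"
      "cos (Mn * (\<theta> k + t1 * v k) + 0) = 1"
    using point_choice[OF Mn v1 s] by blast
  obtain t2 where t2: "\<bar>t2\<bar> * \<bar>v k\<bar> \<le> pi / Mn" "\<bar>t2\<bar> \<le> pi * s / Mn"
      "cos (Mn * (\<theta> k + t2 * v k) + pi) = 1"
    using point_choice[OF Mn v1 s] by blast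
  have c1: "cos (Mn * (\<theta> k + t1 * v k)) = 1" using t1(3) by simp
  have c2: "cos (Mn * (\<theta> k + t2 * v k)) = -1" using t2(3) by (simp add: cos_periodic_pi)
  have small: "pi * s / Mn < 1 / real n"
    using M1 Mn npos unfolding Mn_def by (simp add: field_simps)
  define y1 where "y1 = (\<lambda>j. \<theta> j + t1 * v j)"
  define y2 where "y2 = (\<lambda>j. \<theta> j + t2 * v j)"
  have int: "- 1 / real n < t" "t < 1 / real n" if "\<bar>t\<bar> \<le> pi * s / Mn" for t
    using that small by (auto simp: abs_le_iff)
  have B: "real n * sup_norm_fin (\<lambda>j. t * v j) \<le> real n * (pi * s / Mn * s)" if "\<bar>t\<bar> \<le> pi * s / Mn" for t
  proof -
    have "sup_norm_fin (\<lambda>j. t * v j) \<le> pi * s / Mn * s"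
      using sn[of t] that s by (meson order_trans mult_right_mono order.trans zero_le_one le_trans
          less_imp_le[OF less_le_trans[OF zero_less_one s]])
    then show ?thesis using npos by (intro mult_left_mono) auto
  qed
  have e3: "real n * (pi * s / Mn * s) \<le> c n / 6"
  proof -
    have "6 * n * pi * (s * s) \<le> Mn * c n" using M4 cpos unfolding Mn_def by (simp add: field_simps)
    then show ?thesis using Mn by (simp add: field_simps power2_eq_square)
  qed
  have U1: "\<bar>U \<theta> - U y1\<bar> \<le> c n / 6" using H[OF int[OF t1(2)]] B[OF t1(2)] e3 unfolding y1_def by linarith
  have U2: "\<bar>U \<theta> - U y2\<bar> \<le> c n / 6" using H[OF int[OF t2(2)]] B[OF t2(2)] e3 unfolding y2_def by linarith
  have U12: "\<bar>U y1 - U y2\<bar> \<le> c n / 3" using U1 U2 by linarith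
  have "sup_norm_fin (\<lambda>j. y2 j - y1 j) \<le> \<bar>t2 - t1\<bar> * s"
  proof -
    have "(\<lambda>j. y2 j - y1 j) = (\<lambda>j. (t2 - t1) * v j)" unfolding y1_def y2_def by (auto simp: algebra_simps)
    then show ?thesis using sn[of "t2 - t1"] by simp
  qed
  also have "\<dots> \<le> (pi * s / Mn + pi * s / Mn) * s"
    using t1(2) t2(2) s by (intro mult_right_mono) auto
  also have "\<dots> < dl"
  proof -
    have "2 * pi * (s * s) < Mn * dl" using M2 dl unfolding Mn_def by (simp add: field_simps)
    then show ?thesis using Mn by (simp add: field_simps power2_eq_square)
  qed
  finally have u12: "\<bar>u y1 - u y2\<bar> < c n / 3" by (rule uc)
  have Wd: "\<bar>(\<Sum>j. c j * cos (real (M j) * y1 k)) - (\<Sum>j. c j * cos (real (M j) * y2 k))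
          - c n * (cos (real (M n) * y1 k) - cos (real (M n) * y2 k))\<bar>
         \<le> L * \<bar>y1 k - y2 k\<bar> + 2 * c n / 3"
    unfolding c_def L_def by (rule W_decomp[OF e])
  have cc: "cos (real (M n) * y1 k) - cos (real (M n) * y2 k) = 2"
    using c1 c2 unfolding y1_def y2_def Mn_def by simp
  have dk: "\<bar>y1 k - y2 k\<bar> \<le> 2 * pi / Mn"
  proof -
    have "\<bar>y1 k - y2 k\<bar> = \<bar>t1 * v k - t2 * v k\<bar>" unfolding y1_def y2_def by simp
    also have "\<dots> \<le> \<bar>t1\<bar> * \<bar>v k\<bar> + \<bar>t2\<bar> * \<bar>v k\<bar>"
      using abs_triangle_ineq4[of "t1 * v k" "t2 * v k"] by (simp add: abs_mult)
    finally show ?thesis using t1(1) t2(1) by simp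
  qed
  have Lb: "L * \<bar>y1 k - y2 k\<bar> \<le> c n / 3"
  proof -
    have "L * \<bar>y1 k - y2 k\<bar> \<le> L * (2 * pi / Mn)" using dk Lnn by (rule mult_left_mono)
    also have "\<dots> \<le> c n / 3"
    proof -
      have "6 * pi * L \<le> Mn * c n" using M3 cpos unfolding Mn_def by (simp add: field_simps)
      then show ?thesis using Mn by (simp add: field_simps)
    qed
    finally show ?thesis .
  qed
  define Wa where "Wa = (\<Sum>j. c j * cos (real (M j) * y1 k)) - (\<Sum>j. c j * cos (real (M j) * y2 k))"
  have UU: "U y1 - U y2 = (u y1 - u y2) + Wa"
    unfolding U_def Wa_def by simp
  have W2: "\<bar>Wa - c n * 2\<bar> \<le> L * \<bar>y1 k - y2 k\<bar> + 2 * c n / 3"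
    using Wd cc unfolding Wa_def by simp
  show False using U12 u12 W2 Lb cpos unfolding UU by (simp add: abs_le_iff abs_less_iff)
qed


primrec MSq :: "(nat \<Rightarrow> real \<Rightarrow> nat) \<Rightarrow> (nat \<Rightarrow> real) \<Rightarrow> nat \<Rightarrow> nat \<times> real" where
  "MSq B c 0 = (B 0 0, c 0 * real (B 0 0))"
| "MSq B c (Suc m) = (B (Suc m) (snd (MSq B c m)),
      snd (MSq B c m) + c (Suc m) * real (B (Suc m) (snd (MSq B c m))))"

lemma M_exists: "\<exists>M::nat \<Rightarrow> nat. \<forall>m. M m = B m (\<Sum>j<m. c j * real (M j))"
proof -
  define M where "M m = fst (MSq B c m)" for m
  have sn: "snd (MSq B c m) = (\<Sum>j<Suc m. c j * real (M j))" for m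
    by (induction m) (auto simp: M_def)
  have "M m = B m (\<Sum>j<m. c j * real (M j))" for m
  proof (cases m)
    case 0 then show ?thesis by (simp add: M_def)
  next
    case (Suc m') then show ?thesis using sn[of m'] by (simp add: M_def)
  qed
  then show ?thesis by blast
qed

lemma rmc_struct:
  fixes \<phi> :: "complex \<Rightarrow> complex"
  assumes rm: "riemann_map_closed \<phi> U" and bB: "bounded B" and BU: "B \<subseteq> closure U"
  obtains D S C where "continuous_on D \<phi>" "inj_on \<phi> D" "\<phi> ` D = closure U" "S \<subseteq> D" "open S"
    "\<phi> holomorphic_on S" "\<phi> ` S = U" "S \<subseteq> ball 0 1" "compact C" "C \<subseteq> D" "sphere 0 1 \<subseteq> C"
    "C \<subseteq> cball 0 1" "B \<subseteq> \<phi> ` C"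
proof (cases "bounded U")
  case True
  then show ?thesis using rm BU unfolding riemann_map_closed_def
    by (intro that[of "cball 0 1" "ball 0 1" "cball 0 1"]) auto
next
  case False
  then obtain p where p: "p \<in> ball 0 1" and c: "continuous_on (cball 0 1 - {p}) \<phi>"
    and i: "inj_on \<phi> (cball 0 1 - {p})" and im: "\<phi> ` (cball 0 1 - {p}) = closure U"
    and h: "\<phi> holomorphic_on (ball 0 1 - {p})" and imS: "\<phi> ` (ball 0 1 - {p}) = U"
    and lim: "filterlim \<phi> at_infinity (at p)"
    using rm unfolding riemann_map_closed_def by blast
  obtain R where R: "\<And>z. z \<in> B \<Longrightarrow> norm z \<le> R" "R \<ge> 0"
    using bB unfolding bounded_iff by (metis norm_ge_zero order_trans linorder_linear)
  have "\<forall>\<^sub>F x in at p. R + 1 \<le> norm (\<phi> x)"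
    using lim R(2) unfolding filterlim_at_infinity[OF R(2)] by auto
  then obtain d where d: "d > 0" and dp: "\<And>x. x \<noteq> p \<Longrightarrow> dist x p < d \<Longrightarrow> R + 1 \<le> norm (\<phi> x)"
    unfolding eventually_at by auto
  define d' where "d' = min d ((1 - norm p) / 2)"
  have d'pos: "d' > 0" using d p by (auto simp: d'_def)
  define C where "C = cball 0 1 - ball p d'"
  have CD: "C \<subseteq> cball 0 1 - {p}" using d'pos by (auto simp: C_def)
  show ?thesis
  proof (rule that[of "cball 0 1 - {p}" "ball 0 1 - {p}" C])
    show "compact C" unfolding C_def by (intro compact_diff) auto
    show "sphere 0 1 \<subseteq> C"
    proof
      fix w :: complex assume w: "w \<in> sphere 0 1"
      have "norm w \<le> norm p + dist w p" by (metis dist_norm norm_triangle_sub add.commute)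
      then have "dist w p \<ge> 1 - norm p" using w by simp
      moreover have "d' \<le> (1 - norm p) / 2" unfolding d'_def by (rule min.cobounded2)
      moreover have "1 - norm p > 0" using p by simp
      ultimately show "w \<in> C" using w by (auto simp: C_def dist_commute)
    qed
    show "B \<subseteq> \<phi> ` C"
    proof
      fix z assume z: "z \<in> B"
      then obtain w where w: "w \<in> cball 0 1 - {p}" "z = \<phi> w" using BU im by blast
      have "w \<notin> ball p d'"
      proof
        assume "w \<in> ball p d'"
        then have "dist w p < d" using d'_def by (auto simp: dist_commute)
        then have "R + 1 \<le> norm (\<phi> w)" using dp w by auto
        then show False using R(1)[OF z] w by simp
      qed
      then show "z \<in> \<phi> ` C" using w by (auto simp: C_def)
    qed
  qed (use c i im h imS CD in auto)
qed

lemma rmc_circle: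
  fixes \<phi> :: "complex \<Rightarrow> complex"
  assumes rm: "riemann_map_closed \<phi> U" and oU: "open U"
  shows "continuous_on (sphere 0 1) \<phi>" "\<phi> ` sphere 0 1 \<subseteq> frontier U"
proof -
  obtain D S C where D: "continuous_on D \<phi>" "inj_on \<phi> D" "\<phi> ` D = closure U" "S \<subseteq> D" "open S"
    "\<phi> holomorphic_on S" "\<phi> ` S = U" "S \<subseteq> ball 0 1" "compact C" "C \<subseteq> D" "sphere 0 1 \<subseteq> C"
    using rmc_struct[OF rm, of "{}"] by (metis bounded_empty empty_subsetI)
  show "continuous_on (sphere 0 1) \<phi>" using D by (meson continuous_on_subset order_trans)
  show "\<phi> ` sphere 0 1 \<subseteq> frontier U"
  proof
    fix z assume "z \<in> \<phi> ` sphere 0 1"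
    then obtain w where w: "w \<in> sphere 0 1" "z = \<phi> w" by auto
    have wD: "w \<in> D" using w D by auto
    have "z \<in> closure U" using w wD D(3) by auto
    moreover have "z \<notin> U"
    proof
      assume "z \<in> U"
      then obtain w' where w': "w' \<in> S" "z = \<phi> w'" using D(7) by auto
      then have "w' = w" using D(2) D(4) wD w by (metis inj_onD subsetD)
      then show False using w' w D(8) by auto
    qed
    ultimately show "z \<in> frontier U" using oU by (simp add: frontier_def interior_open)
  qed
qed

lemma rmc_psi:
  fixes \<phi> :: "complex \<Rightarrow> complex"
  assumes rm: "riemann_map_closed \<phi> U" and oU: "open U" and bW: "bounded W" and WU: "W \<subseteq> U"
  obtains \<psi> where "continuous_on (closure W) \<psi>" "\<psi> holomorphic_on W" "\<psi> ` W \<subseteq> ball 0 1"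
    "\<psi> ` closure W \<subseteq> cball 0 1" "\<And>w. w \<in> sphere 0 1 \<Longrightarrow> \<phi> w \<in> closure W \<Longrightarrow> \<psi> (\<phi> w) = w"
proof -
  have bc: "bounded (closure W)" using bW by (rule bounded_closure)
  have cU: "closure W \<subseteq> closure U" using WU by (rule closure_mono)
  obtain D S C where D: "continuous_on D \<phi>" "inj_on \<phi> D" "\<phi> ` D = closure U" "S \<subseteq> D" "open S"
    "\<phi> holomorphic_on S" "\<phi> ` S = U" "S \<subseteq> ball 0 1" "compact C" "C \<subseteq> D" "sphere 0 1 \<subseteq> C"
    "C \<subseteq> cball 0 1" "closure W \<subseteq> \<phi> ` C"
    using rmc_struct[OF rm bc cU] by blast
  define \<psi> where "\<psi> = inv_into C \<phi>"
  have iC: "inj_on \<phi> C" using D(2,10) inj_on_subset by blast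
  have cont: "continuous_on (\<phi> ` C) \<psi>"
    unfolding \<psi>_def by (rule continuous_on_inv[OF continuous_on_subset[OF D(1) D(10)] D(9)])
      (use iC in auto)
  obtain g where g: "g holomorphic_on (\<phi> ` S)" "\<And>z. z \<in> S \<Longrightarrow> g (\<phi> z) = z"
    using holomorphic_has_inverse[OF D(6) D(5) inj_on_subset[OF D(2) D(4)]] by metis
  have eqg: "\<psi> z = g z \<and> \<psi> z \<in> S" if z: "z \<in> W" for z
  proof -
    obtain w where w: "w \<in> S" "z = \<phi> w" using z WU D(7) by auto
    have zC: "z \<in> \<phi> ` C" using z D(13) closure_subset by blast
    have "\<psi> z \<in> C" unfolding \<psi>_def using zC by (rule inv_into_into)
    moreover have "\<phi> (\<psi> z) = z" unfolding \<psi>_def using zC by (rule f_inv_into_f)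
    ultimately have "\<psi> z = w" using w D(2,4,10) by (metis inj_onD subsetD)
    then show ?thesis using g(2) w by auto
  qed
  show ?thesis
  proof
    show "continuous_on (closure W) \<psi>" using cont D(13) continuous_on_subset by blast
    show "\<psi> holomorphic_on W"
      by (rule holomorphic_transform[of g]) (use holomorphic_on_subset[OF g(1)] WU D(7) eqg in auto)
    show "\<psi> ` W \<subseteq> ball 0 1" using eqg D(8) by blast
    show "\<psi> ` closure W \<subseteq> cball 0 1"
      using D(12,13) unfolding \<psi>_def by (auto intro!: inv_into_into[THEN subsetD[OF D(12)]])
    fix w assume "w \<in> sphere 0 1" "\<phi> w \<in> closure W"
    then show "\<psi> (\<phi> w) = w" unfolding \<psi>_def using D(11) iC by (auto intro: inv_into_f_f)
  qed
qed


lemma G_props: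
  fixes c :: "nat \<Rightarrow> real" and M :: "nat \<Rightarrow> nat"
  assumes sc: "summable c" and cnn: "\<And>j. c j \<ge> 0"
  defines "G \<equiv> \<lambda>w. \<Sum>j. complex_of_real (c j) * w ^ M j"
  shows "continuous_on (cball 0 1) G" "G holomorphic_on ball 0 1"
    "\<And>w. w \<in> cball 0 1 \<Longrightarrow> norm (G w) \<le> suminf c"
    "\<And>a. Re (G (cis a)) = (\<Sum>j. c j * cos (real (M j) * a))"
proof -
  have bnd: "norm (complex_of_real (c j) * w ^ M j) \<le> c j" if "w \<in> cball 0 1" for j w
  proof -
    have "norm w ^ M j \<le> 1" using that by (simp add: power_le_one)
    then show ?thesis using cnn[of j] by (simp add: norm_mult norm_power mult_left_le)
  qed
  have ul: "uniform_limit (cball 0 1) (\<lambda>n w. \<Sum>i<n. complex_of_real (c i) * w ^ M i) G sequentially"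
    unfolding G_def by (rule Weierstrass_m_test[OF _ sc]) (use bnd in auto)
  have ev: "\<forall>\<^sub>F n in sequentially. continuous_on (cball 0 1) (\<lambda>w. \<Sum>i<n. complex_of_real (c i) * w ^ M i) \<and>
      (\<lambda>w. \<Sum>i<n. complex_of_real (c i) * w ^ M i) holomorphic_on ball 0 1"
    by (intro always_eventually allI conjI continuous_intros holomorphic_intros)
  obtain "continuous_on (cball 0 1) G" "G holomorphic_on ball 0 1"
    using holomorphic_uniform_limit[OF ev ul] by auto
  then show "continuous_on (cball 0 1) G" "G holomorphic_on ball 0 1" by auto
  show "norm (G w) \<le> suminf c" if "w \<in> cball 0 1" for w
    unfolding G_def by (rule norm_suminf_le[OF _ sc]) (use bnd that in auto)
  fix a
  have s: "summable (\<lambda>j. complex_of_real (c j) * cis a ^ M j)"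
    by (rule summable_comparison_test'[OF sc]) (use bnd in auto)
  show "Re (G (cis a)) = (\<Sum>j. c j * cos (real (M j) * a))"
  proof -
    have r: "Re (cis a ^ m) = cos (real m * a)" for m by (subst Complex.DeMoivre) simp
    show ?thesis unfolding G_def Re_suminf[OF s] by (simp add: r)
  qed
qed


lemma cis_per: "cis (x + 2 * pi) = cis x"
  by (simp add: complex_eq_iff)

theorem lemma5p3:
  fixes \<Omega> :: "'i::finite \<Rightarrow> complex set"
    and kk :: "'i \<Rightarrow> nat"
    and V :: "'i \<Rightarrow> nat \<Rightarrow> complex set"
    and \<phi> :: "'i \<Rightarrow> nat \<Rightarrow> complex \<Rightarrow> complex"
    and r :: "'i \<Rightarrow> nat" and k :: 'i and s :: nat
  assumes dom: "\<And>i. bdd_domain_jordan_bdry (\<Omega> i) (kk i)"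
    and comps: "\<And>i. V i ` {..<kk i} = components (- closure (\<Omega> i))"
    and comps_inj: "\<And>i. inj_on (V i) {..<kk i}"
    and riem: "\<And>i j. j < kk i \<Longrightarrow> riemann_map_closed (\<phi> i j) (- closure (V i j))"
    and r: "\<And>i. r i < kk i"
    and s: "s \<ge> 1"
  shows "\<forall>f\<in>A_space \<Omega>. \<forall>\<epsilon>>0. \<exists>g\<in>S_set \<Omega> \<phi> r k s.
           \<forall>z\<in>Pi UNIV (\<lambda>i. closure (\<Omega> i)). norm (f z - g z) < \<epsilon>"
proof (intro ballI allI impI)
  fix f :: "('i \<Rightarrow> complex) \<Rightarrow> complex" and \<epsilon> :: real
  assume f: "f \<in> A_space \<Omega>" and e: "\<epsilon> > 0"
  define K where "K = Pi UNIV (\<lambda>i. closure (\<Omega> i))"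
  define T where "T = Pi UNIV (\<lambda>i::'i. sphere (0::complex) 1)"
  define U where "U i = - closure (V i (r i))" for i
  have oO: "open (\<Omega> i)" and bO: "bounded (\<Omega> i)" for i
    using dom[of i] unfolding bdd_domain_jordan_bdry_def by auto
  have Vc: "V i (r i) \<in> components (- closure (\<Omega> i))" for i
    using comps[of i] r[of i] by blast
  have oU: "open (U i)" for i unfolding U_def by auto
  have OU: "\<Omega> i \<subseteq> U i" for i
  proof -
    have "V i (r i) \<subseteq> - closure (\<Omega> i)" using Vc in_components_subset by blast
    then have "\<Omega> i \<inter> V i (r i) = {}" using closure_subset by blast
    then have "\<Omega> i \<inter> closure (V i (r i)) = {}" using open_Int_closure_eq_empty[OF oO] by blast
    then show ?thesis unfolding U_def by blast
  qed
  have frU: "frontier (U i) \<subseteq> closure (\<Omega> i)" for i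
  proof -
    have "frontier (U i) = frontier (closure (V i (r i)))" unfolding U_def by (rule frontier_complement)
    also have "\<dots> \<subseteq> frontier (V i (r i))"
      unfolding frontier_def using interior_mono[OF closure_subset[of "V i (r i)"]] by auto
    also have "\<dots> \<subseteq> closure (\<Omega> i)"
      by (rule frontier_of_components_closed_complement[OF closed_closure Vc])
    finally show ?thesis .
  qed
  have rmi: "riemann_map_closed (\<phi> i (r i)) (U i)" for i unfolding U_def using riem r by blast
  have circ_c: "continuous_on (sphere 0 1) (\<phi> i (r i))" for i using rmc_circle(1)[OF rmi oU] .
  have circ_i: "\<phi> i (r i) w \<in> closure (\<Omega> i)" if "w \<in> sphere 0 1" for i w
    using rmc_circle(2)[OF rmi oU, of i] frU[of i] that by blast
  obtain \<psi> where psi: "continuous_on (closure (\<Omega> k)) \<psi>" "\<psi> holomorphic_on (\<Omega> k)"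
    "\<psi> ` \<Omega> k \<subseteq> ball 0 1" "\<psi> ` closure (\<Omega> k) \<subseteq> cball 0 1"
    "\<And>w. w \<in> sphere 0 1 \<Longrightarrow> \<phi> k (r k) w \<in> closure (\<Omega> k) \<Longrightarrow> \<psi> (\<phi> k (r k) w) = w"
    using rmc_psi[OF rmi[of k] oU bO OU] by blast
  define Phi where "Phi \<zeta> = (\<lambda>i. \<phi> i (r i) (\<zeta> i))" for \<zeta> :: "'i \<Rightarrow> complex"
  have cPhi: "continuous_on T Phi"
    unfolding Phi_def
  proof (intro continuous_on_coordinatewise_then_product)
    fix i
    show "continuous_on T (\<lambda>x. \<phi> i (r i) (x i))"
      by (rule continuous_on_compose2[OF circ_c continuous_on_subset[OF continuous_on_product_coordinates]])
        (auto simp: T_def)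
  qed
  have PhiK: "Phi ` T \<subseteq> K" unfolding Phi_def T_def K_def by (auto simp: Pi_iff intro!: circ_i)
  have cisT: "(\<lambda>i. cis (\<theta> i)) \<in> T" for \<theta> :: "'i \<Rightarrow> real" by (simp add: T_def)
  have Peq: "phi_r_T \<phi> r \<theta> = Phi (\<lambda>i. cis (\<theta> i))" for \<theta>
    by (simp add: phi_r_T_def Phi_def cis_conv_exp)
  have ccis: "continuous_on UNIV (\<lambda>\<theta>::'i \<Rightarrow> real. \<lambda>i. cis (\<theta> i))"
    by (intro continuous_on_coordinatewise_then_product continuous_on_compose2[OF continuous_on_cis
          continuous_on_product_coordinates]) auto
  have ucont: "continuous_on UNIV (\<lambda>\<theta>. Re (h (phi_r_T \<phi> r \<theta>)))" if h: "h \<in> A_space \<Omega>" for h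
  proof -
    have ch: "continuous_on K h" using h unfolding A_space_def K_def by auto
    have "continuous_on UNIV (\<lambda>\<theta>. Phi (\<lambda>i. cis (\<theta> i)))"
      by (rule continuous_on_compose2[OF cPhi ccis]) (use cisT in auto)
    then have "continuous_on UNIV (\<lambda>\<theta>. h (Phi (\<lambda>i. cis (\<theta> i))))"
      by (rule continuous_on_compose2[OF ch]) (use PhiK cisT in auto)
    then show ?thesis unfolding Peq by (intro continuous_intros)
  qed
  have uper: "Re (h (phi_r_T \<phi> r (\<theta>(j := \<theta> j + 2 * pi)))) = Re (h (phi_r_T \<phi> r \<theta>))" for h \<theta> j
  proof -
    have "(\<lambda>i. cis ((\<theta>(j := \<theta> j + 2 * pi)) i)) = (\<lambda>i. cis (\<theta> i))"
      by (auto simp: cis_per)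
    then show ?thesis unfolding Peq by simp
  qed
  define Ff where "Ff \<zeta> = Re (f (Phi \<zeta>))" for \<zeta>
  have cFf: "continuous_on T Ff"
  proof -
    have ch: "continuous_on K f" using f unfolding A_space_def K_def by auto
    show ?thesis unfolding Ff_def
      by (intro continuous_intros continuous_on_compose2[OF ch cPhi PhiK])
  qed
  define c where "c j = \<epsilon>/2 * (1/4)^j" for j :: nat
  have cpos: "c j > 0" for j unfolding c_def using e by simp
  have "\<forall>n. \<exists>d>0. \<forall>\<theta> \<theta>'. sup_norm_fin (\<lambda>j. \<theta>' j - \<theta> j) < d \<longrightarrow>
           \<bar>Ff (\<lambda>i. cis (\<theta> i)) - Ff (\<lambda>i. cis (\<theta>' i))\<bar> < c n / 3"
  proof
    fix n
    have "c n / 3 > 0" using cpos[of n] by simp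
    then show "\<exists>d>0. \<forall>\<theta> \<theta>'. sup_norm_fin (\<lambda>j. \<theta>' j - \<theta> j) < d \<longrightarrow>
           \<bar>Ff (\<lambda>i. cis (\<theta> i)) - Ff (\<lambda>i. cis (\<theta>' i))\<bar> < c n / 3"
      by (rule uc_lemma[OF cFf[unfolded T_def]])
  qed
  then obtain dd where dd: "\<And>n. dd n > 0" "\<And>n \<theta> \<theta>'. sup_norm_fin (\<lambda>j. \<theta>' j - \<theta> j) < dd n \<Longrightarrow>
           \<bar>Ff (\<lambda>i. cis (\<theta> i)) - Ff (\<lambda>i. cis (\<theta>' i))\<bar> < c n / 3"
    by metis
  define Bd where "Bd m L = nat \<lceil>pi * real s * real m + 2 * pi * (real s * real s) / dd m
      + 6 * pi * L / c m + 6 * real m * pi * (real s * real s) / c m\<rceil> + 1" for m L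
  obtain M where M: "\<And>m. M m = Bd m (\<Sum>j<m. c j * real (M j))"
    using M_exists[of Bd c] by blast
  define G where "G = (\<lambda>w. \<Sum>j. complex_of_real (c j) * w ^ M j)"
  have sc: "summable c" and Sc: "suminf c = 2 * \<epsilon> / 3"
    using geo_facts(1,2)[of \<epsilon>] unfolding c_def by auto
  note Gp = G_props[OF sc less_imp_le[OF cpos], where M=M, folded G_def]
  define g where "g z = f z + G (\<psi> (z k))" for z
  have gA: "g \<in> A_space \<Omega>"
    unfolding A_space_def
  proof (intro CollectI conjI ballI allI)
    have ch: "continuous_on K f" using f unfolding A_space_def K_def by auto
    have "continuous_on K (\<lambda>z. G (\<psi> (z k)))"
    proof (rule continuous_on_compose2[OF Gp(1)])
      show "continuous_on K (\<lambda>z. \<psi> (z k))"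
        by (rule continuous_on_compose2[OF psi(1) continuous_on_subset[OF continuous_on_product_coordinates]])
          (auto simp: K_def)
      show "(\<lambda>z. \<psi> (z k)) ` K \<subseteq> cball 0 1" using psi(4) by (auto simp: K_def)
    qed
    then show "continuous_on (Pi UNIV (\<lambda>i. closure (\<Omega> i))) g"
      unfolding g_def using ch unfolding K_def by (intro continuous_intros)
  next
    fix z i0 assume z: "z \<in> Pi UNIV \<Omega>"
    have hf: "(\<lambda>w. f (z(i0 := w))) holomorphic_on \<Omega> i0" using f z unfolding A_space_def by auto
    have hG: "(\<lambda>w. G (\<psi> ((z(i0 := w)) k))) holomorphic_on \<Omega> i0"
    proof (cases "i0 = k")
      case True
      have "(G \<circ> \<psi>) holomorphic_on \<Omega> k"
        by (rule holomorphic_on_compose_gen[OF psi(2) Gp(2) psi(3)])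
      then show ?thesis using True by (simp add: o_def)
    next
      case False
      then show ?thesis by simp
    qed
    show "(\<lambda>w. g (z(i0 := w))) holomorphic_on \<Omega> i0"
      unfolding g_def by (rule holomorphic_on_add[OF hf hG])
  qed
  have key: "Re (g (phi_r_T \<phi> r \<theta>)) = Ff (\<lambda>i. cis (\<theta> i)) + (\<Sum>j. c j * cos (real (M j) * \<theta> k))"
    for \<theta>
  proof -
    have w: "cis (\<theta> k) \<in> sphere 0 1" by simp
    have "\<psi> (phi_r_T \<phi> r \<theta> k) = cis (\<theta> k)"
      unfolding Peq Phi_def using psi(5)[OF w circ_i[OF w]] by simp
    then show ?thesis unfolding g_def Ff_def Peq[symmetric] using Gp(4) by (simp add: G_def)
  qed
  have Lnn: "(\<Sum>j<m. c j * real (M j)) \<ge> 0" for m using cpos by (intro sum_nonneg) (simp add: less_imp_le)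
  have Mb: "real (M m) \<ge> pi * real s * real m + 2 * pi * (real s * real s) / dd m
      + 6 * pi * (\<Sum>j<m. c j * real (M j)) / c m + 6 * real m * pi * (real s * real s) / c m + 1" for m
  proof -
    let ?X = "pi * real s * real m + 2 * pi * (real s * real s) / dd m
      + 6 * pi * (\<Sum>j<m. c j * real (M j)) / c m + 6 * real m * pi * (real s * real s) / c m"
    have "real (M m) = real (nat \<lceil>?X\<rceil>) + 1" using M[of m] by (simp add: Bd_def)
    moreover have "real (nat \<lceil>?X\<rceil>) \<ge> ?X" by linarith
    ultimately show ?thesis by linarith
  qed
  have t1: "pi * real s * real m \<ge> 0" "2 * pi * (real s * real s) / dd m \<ge> 0"
      "6 * pi * (\<Sum>j<m. c j * real (M j)) / c m \<ge> 0" "6 * real m * pi * (real s * real s) / c m \<ge> 0" for m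
    using dd(1)[of m] cpos[of m] Lnn[of m] by auto
  have Dn: "(\<lambda>\<theta>. Re (g (phi_r_T \<phi> r \<theta>))) \<in> D_set n k s" if n: "n \<ge> 1" for n
  proof -
    show "(\<lambda>\<theta>. Re (g (phi_r_T \<phi> r \<theta>))) \<in> D_set n k s"
      unfolding D_set_def
    proof (intro CollectI conjI allI impI)
      show "continuous_on UNIV (\<lambda>\<theta>. Re (g (phi_r_T \<phi> r \<theta>)))" by (rule ucont[OF gA])
      show "Re (g (phi_r_T \<phi> r (\<theta>(j := \<theta> j + 2 * pi)))) = Re (g (phi_r_T \<phi> r \<theta>))" for \<theta> j
        by (rule uper)
      fix \<theta> v :: "'i \<Rightarrow> real"
      assume vc: "1 / real s \<le> \<bar>v k\<bar> \<and> \<bar>v k\<bar> \<le> real s \<and> (\<forall>j. \<bar>v j\<bar> \<le> real s)"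
      have "\<exists>t. - 1 / real n < t \<and> t < 1 / real n \<and>
            real n * sup_norm_fin (\<lambda>j. (\<theta> j + t * v j) - \<theta> j) <
            \<bar>(\<lambda>x. Ff (\<lambda>i. cis (x i)) + (\<Sum>j. c j * cos (real (M j) * x k))) \<theta>
             - (\<lambda>x. Ff (\<lambda>i. cis (x i)) + (\<Sum>j. c j * cos (real (M j) * x k))) (\<lambda>j. \<theta> j + t * v j)\<bar>"
      proof (rule core[where u = "\<lambda>x. Ff (\<lambda>i. cis (x i))" and dl = "dd n"])
        show "c j = \<epsilon> / 2 * (1 / 4) ^ j" for j by (simp add: c_def)
        show "\<epsilon> > 0" "n \<ge> 1" "real s \<ge> 1" "dd n > 0" using e n s dd(1) by auto
        show "\<bar>Ff (\<lambda>i. cis (x i)) - Ff (\<lambda>i. cis (y i))\<bar> < c n / 3"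
          if "sup_norm_fin (\<lambda>j. y j - x j) < dd n" for x y using dd(2) that by blast
        show "real (M n) > pi * real s * real n" "real (M n) > 2 * pi * (real s * real s) / dd n"
          "real (M n) \<ge> 6 * pi * (\<Sum>j<n. c j * real (M j)) / c n"
          "real (M n) \<ge> 6 * real n * pi * (real s * real s) / c n"
          using Mb[of n] t1[of n] by linarith+
        show "1 / real s \<le> \<bar>v k\<bar>" "\<bar>v j\<bar> \<le> real s" for j using vc by auto
      qed
      then show "\<exists>t. - 1 / real n < t \<and> t < 1 / real n \<and>
          (let y = \<lambda>j. \<theta> j + t * v j
           in real n * sup_norm_fin (\<lambda>j. y j - \<theta> j) < \<bar>Re (g (phi_r_T \<phi> r \<theta>)) - Re (g (phi_r_T \<phi> r y))\<bar>)"
        unfolding key Let_def by simp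
    qed
  qed
  have gS: "g \<in> S_set \<Omega> \<phi> r k s"
    unfolding S_set_def E_set_def
  proof (intro INT_I)
    fix n :: nat assume n: "n \<in> {1..}"
    then have n: "n \<ge> 1" by simp
    show "g \<in> {f \<in> A_space \<Omega>. (\<lambda>\<theta>. Re (f (phi_r_T \<phi> r \<theta>))) \<in> D_set n k s}"
      using gA Dn[OF n] by simp
  qed
  have gd: "\<forall>z\<in>K. norm (f z - g z) < \<epsilon>"
  proof
    fix z assume z: "z \<in> K"
    then have "z k \<in> closure (\<Omega> k)" unfolding K_def by (simp add: Pi_iff)
    then have "\<psi> (z k) \<in> cball 0 1" using psi(4) by blast
    then have "norm (G (\<psi> (z k))) \<le> suminf c" unfolding G_def by (rule Gp(3))
    then have "norm (G (\<psi> (z k))) \<le> 2 * \<epsilon> / 3" unfolding Sc .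
    then show "norm (f z - g z) < \<epsilon>" unfolding g_def using e by simp
  qed
  show "\<exists>g\<in>S_set \<Omega> \<phi> r k s. \<forall>z\<in>Pi UNIV (\<lambda>i. closure (\<Omega> i)). norm (f z - g z) < \<epsilon>"
    using gS gd unfolding K_def by blast
qed

end
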